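(* $\mathrm{LIM}_{\operatorname{non}(\mathcal N)}(\mathcal L)\supsetneq\mathcal L$; that is, there is a $\operatorname{non}(\mathcal N)$-sequence of Lebesgue measurable functions $\mathbb R\to\mathbb R$ converging pointwise to a function that is not Lebesgue measurable.
   Context: $\mathcal L$ is the family of Lebesgue measurable functions $\mathbb R\to\mathbb R$. For an infinite cardinal $\kappa$, a $\kappa$-sequence $(f_\alpha)_{\alpha<\kappa}$ of real functions converges pointwise to $f$ if for every $x$ and every $\varepsilon>0$ there is $\alpha_0<\kappa$ with $|f_\alpha(x)-f(x)|<\varepsilon$ for all $\alpha_0<\alpha<\kappa$; $\mathrm{LIM}_\kappa(\mathcal F)$ is the set of all pointwise limits of $\kappa$-sequences of elements of $\mathcal F$. $\operatorname{non}(\mathcal N)$ is the least cardinality of a non-null subset of $[0,1]$. *)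

theory Defs
  imports "HOL-Analysis.Analysis"
begin

text \<open>Null = Lebesgue null
  (lebesgue is the complete Lebesgue measure, so this is outer measure zero).\<close>
definition is_nonN :: "'a rel \<Rightarrow> bool" where
  "is_nonN r \<longleftrightarrow> Card_order r
     \<and> (\<exists>A::real set. A \<subseteq> {0..1} \<and> A \<notin> null_sets lebesgue \<and> (card_of A, r) \<in> ordIso)
     \<and> (\<forall>B::real set. B \<subseteq> {0..1} \<and> B \<notin> null_sets lebesgue \<longrightarrow> (r, card_of B) \<in> ordLeq)"

definition wo_pointwise_conv :: "'a rel \<Rightarrow> ('a \<Rightarrow> real \<Rightarrow> real) \<Rightarrow> (real \<Rightarrow> real) \<Rightarrow> bool" where
  "wo_pointwise_conv r f g \<longleftrightarrow>
     (\<forall>x. \<forall>\<epsilon>>0. \<exists>\<alpha>0\<in>Field r. \<forall>\<alpha>\<in>Field r.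
        (\<alpha>0, \<alpha>) \<in> r \<and> \<alpha> \<noteq> \<alpha>0 \<longrightarrow> \<bar>f \<alpha> x - g x\<bar> < \<epsilon>)"

definition LIM_wo :: "'a rel \<Rightarrow> (real \<Rightarrow> real) set \<Rightarrow> (real \<Rightarrow> real) set" where
  "LIM_wo r F = {g. \<exists>f. (\<forall>\<alpha>\<in>Field r. f \<alpha> \<in> F) \<and> wo_pointwise_conv r f g}"

end

theory Submission imports Defs begin
unbundle cardinal_syntax

lemma fnull: "A \<in> lmeasurable \<Longrightarrow> measure lebesgue A = 0 \<Longrightarrow> A \<in> null_sets lebesgue"
  by (simp add: emeasure_eq_measure2 null_sets_def)

lemma vitali:
  fixes E :: "real set"
  assumes E: "E \<subseteq> {0..1}" and allm: "\<And>S. S \<subseteq> E \<Longrightarrow> S \<in> sets lebesgue"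
  shows "E \<in> null_sets lebesgue"
proof -
  define v where "v x = (SOME y. y \<in> E \<and> x - y \<in> \<rat>)" for x
  have vE: "v x \<in> E \<and> x - v x \<in> \<rat>" if "x \<in> E" for x
    unfolding v_def by (rule someI[of _ x]) (use that in auto)
  have veq: "v x = v x'" if "x - x' \<in> \<rat>" for x x'
  proof -
    have "(\<lambda>y. y \<in> E \<and> x - y \<in> \<rat>) = (\<lambda>y. y \<in> E \<and> x' - y \<in> \<rat>)"
    proof (intro ext iffI)
      fix y assume "y \<in> E \<and> x - y \<in> \<rat>"
      then have "x' - y = (x - y) - (x - x')" "x - y \<in> \<rat>" by auto
      with that show "y \<in> E \<and> x' - y \<in> \<rat>" by (metis Rats_diff \<open>y \<in> E \<and> x - y \<in> \<rat>\<close>)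
    next
      fix y assume "y \<in> E \<and> x' - y \<in> \<rat>"
      then have "x - y = (x' - y) + (x - x')" "x' - y \<in> \<rat>" by auto
      with that show "y \<in> E \<and> x - y \<in> \<rat>" by (metis Rats_add \<open>y \<in> E \<and> x' - y \<in> \<rat>\<close>)
    qed
    then show ?thesis unfolding v_def by simp
  qed
  define V where "V = v ` E"
  have VE: "V \<subseteq> E" using vE by (auto simp: V_def)
  have Vl: "V \<in> lmeasurable"
    by (rule fmeasurableI2[of "cbox 0 1"]) (use VE E allm in auto)
  define T where "T q = (+) q ` V" for q :: real
  have Tl: "T q \<in> lmeasurable" for q using Vl by (simp add: T_def measurable_translation)
  have Tm: "measure lebesgue (T q) = measure lebesgue V" for q by (simp add: T_def measure_translation)
  have disj: "T q \<inter> T q' = {}" if "q \<in> \<rat>" "q' \<in> \<rat>" "q \<noteq> q'" for q q'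
  proof (rule ccontr)
    assume "T q \<inter> T q' \<noteq> {}"
    then obtain a b where ab: "a \<in> E" "b \<in> E" "q + v a = q' + v b" by (auto simp: T_def V_def)
    have "v a - v b = q' - q" using ab by simp
    then have "v a - v b \<in> \<rat>" using that by simp
    then have "v (v a) = v (v b)" by (rule veq)
    moreover have "v (v a) = v a"
      by (rule veq) (metis vE ab(1) Rats_minus_iff minus_diff_eq)
    moreover have "v (v b) = v b"
      by (rule veq) (metis vE ab(2) Rats_minus_iff minus_diff_eq)
    ultimately show False using ab that by simp
  qed
  define Q where "Q = \<rat> \<inter> {-1..1::real}"
  have cover: "E \<subseteq> (\<Union>q\<in>Q. T q)"
  proof
    fix x assume x: "x \<in> E"
    have "x \<in> {0..1}" "v x \<in> {0..1}" using vE[OF x] x E by auto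
    then have "x - v x \<in> Q" using vE[OF x] unfolding Q_def by auto
    moreover have "x \<in> T (x - v x)" using x unfolding T_def V_def by force
    ultimately show "x \<in> (\<Union>q\<in>Q. T q)" by blast
  qed
  have TQ: "T q \<subseteq> {-1..2}" if "q \<in> Q" for q
    using that VE E unfolding T_def Q_def by auto
  show ?thesis
  proof (cases "measure lebesgue V = 0")
    case True
    have "(\<Union>q\<in>Q. T q) \<in> null_sets lebesgue"
      by (rule null_sets_UN') (auto simp: Q_def countable_rat Tm True intro!: fnull Tl)
    then show ?thesis using cover completion.complete2 allm by blast
  next
    case False
    then have mpos: "measure lebesgue V > 0" using measure_nonneg[of lebesgue V] by linarith
    obtain N :: nat where N: "real N > 3 / measure lebesgue V" using reals_Archimedean2 by blast
    define F where "F = (\<lambda>n. 1 / real (Suc n)) ` {..<N}"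
    have injF: "inj_on (\<lambda>n. 1 / real (Suc n)) {..<N}" by (auto simp: inj_on_def)
    have cF: "card F = N" using injF by (simp add: F_def card_image)
    have FQ: "F \<subseteq> Q"
    proof -
      have "-1 \<le> 1 / (1 + real n)" for n :: nat
        by (rule order_trans[of _ 0]) auto
      then show ?thesis by (auto simp: F_def Q_def)
    qed
    have "measure lebesgue (\<Union>q\<in>F. T q) = (\<Sum>q\<in>F. measure lebesgue (T q))"
    proof (rule measure_finite_Union)
      show "finite F" by (simp add: F_def)
      show "T ` F \<subseteq> sets lebesgue" using Tl by auto
      show "disjoint_family_on T F" using FQ disj unfolding disjoint_family_on_def Q_def by blast
      show "emeasure lebesgue (T i) \<noteq> \<infinity>" for i using Tl[of i] by (auto simp: fmeasurable_def)
    qed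
    also have "\<dots> = N * measure lebesgue V" by (simp add: Tm cF)
    finally have eq: "measure lebesgue (\<Union>q\<in>F. T q) = N * measure lebesgue V" .
    have "measure lebesgue (\<Union>q\<in>F. T q) \<le> measure lebesgue (cbox (-1) (2::real))"
    proof (rule measure_mono_fmeasurable)
      show "(\<Union>q\<in>F. T q) \<subseteq> cbox (-1) 2" using TQ FQ by auto
      show "(\<Union>q\<in>F. T q) \<in> sets lebesgue" using Tl by (auto simp: F_def intro!: sets.finite_UN)
    qed auto
    then have "N * measure lebesgue V \<le> 3" using eq by simp
    moreover have "N * measure lebesgue V > 3" using N mpos by (simp add: field_simps)
    ultimately show ?thesis by simp
  qed
qed

theorem mainTheorem19:
  fixes r :: "'a rel"
  assumes "is_nonN r"
  shows "(borel_measurable lebesgue :: (real \<Rightarrow> real) set) \<subset> LIM_wo r (borel_measurable lebesgue)"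
proof -
  from assms obtain A :: "real set" where
    co: "Card_order r" and A: "A \<subseteq> {0..1}" "A \<notin> null_sets lebesgue" "|A| =o r"
    and minl: "\<And>B::real set. B \<subseteq> {0..1} \<Longrightarrow> B \<notin> null_sets lebesgue \<Longrightarrow> r \<le>o |B|"
    unfolding is_nonN_def by blast
  have "|Field r| =o |A|"
    using ordIso_symmetric[OF ordIso_transitive[OF A(3) ordIso_symmetric[OF card_of_Field_ordIso[OF co]]]] .
  then obtain e where e: "bij_betw e (Field r) A" using card_of_ordIso by blast
  have "A \<noteq> {}" using A(2) by auto
  then obtain a0 where a0: "a0 \<in> Field r" using e by (auto simp: bij_betw_def)
  have small: "e ` underS r \<alpha> \<in> null_sets lebesgue" if "\<alpha> \<in> Field r" for \<alpha>
  proof (rule ccontr)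
    assume "e ` underS r \<alpha> \<notin> null_sets lebesgue"
    moreover have "e ` underS r \<alpha> \<subseteq> {0..1}"
      using e A(1) Order_Relation.underS_Field[of r \<alpha>] by (auto simp: bij_betw_def)
    ultimately have "r \<le>o |e ` underS r \<alpha>|" using minl by blast
    then have "r <o r"
      using ordLeq_ordLess_trans[OF ordLeq_transitive[OF _ card_of_image] card_of_underS[OF co that]]
      by blast
    then show False using ordLess_irreflexive by blast
  qed
  have sub: "(borel_measurable lebesgue :: (real \<Rightarrow> real) set) \<subseteq> LIM_wo r (borel_measurable lebesgue)"
  proof
    fix g :: "real \<Rightarrow> real" assume "g \<in> borel_measurable lebesgue"
    then show "g \<in> LIM_wo r (borel_measurable lebesgue)"
      unfolding LIM_wo_def wo_pointwise_conv_def
      by (intro CollectI exI[of _ "\<lambda>_. g"] conjI) (use a0 in auto)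
  qed
  obtain S where S: "S \<subseteq> A" "S \<notin> sets lebesgue"
    using vitali[OF A(1)] A(2) by blast
  define g where "g = (indicator S :: real \<Rightarrow> real)"
  define f where "f \<alpha> = (indicator (S \<inter> e ` underS r \<alpha>) :: real \<Rightarrow> real)" for \<alpha>
  have gn: "g \<notin> borel_measurable lebesgue"
    using S(2) by (simp add: g_def borel_measurable_indicator_iff)
  have fm: "f \<alpha> \<in> borel_measurable lebesgue" if "\<alpha> \<in> Field r" for \<alpha>
  proof -
    have "S \<inter> e ` underS r \<alpha> \<in> null_sets lebesgue"
      using completion.complete2[OF _ small[OF that]] by blast
    then show ?thesis unfolding f_def by (intro borel_measurable_indicator) auto
  qed
  have conv: "\<exists>\<alpha>0\<in>Field r. \<forall>\<alpha>\<in>Field r. (\<alpha>0, \<alpha>) \<in> r \<and> \<alpha> \<noteq> \<alpha>0 \<longrightarrow> f \<alpha> x = g x" for x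
  proof (cases "x \<in> A")
    case True
    then obtain \<beta> where b: "\<beta> \<in> Field r" "x = e \<beta>" using e by (auto simp: bij_betw_def)
    show ?thesis
    proof (intro bexI[OF _ b(1)] ballI impI)
      fix \<alpha> assume "\<alpha> \<in> Field r" "(\<beta>, \<alpha>) \<in> r \<and> \<alpha> \<noteq> \<beta>"
      then have "\<beta> \<in> underS r \<alpha>" by (auto simp: underS_def)
      then have "x \<in> e ` underS r \<alpha>" using b by auto
      then show "f \<alpha> x = g x" by (simp add: f_def g_def indicator_def)
    qed
  next
    case False
    show ?thesis
    proof (intro bexI[OF _ a0] ballI impI)
      fix \<alpha> assume "\<alpha> \<in> Field r"
      then have "x \<notin> S \<inter> e ` underS r \<alpha>" "x \<notin> S"
        using False e S(1) Order_Relation.underS_Field[of r \<alpha>] by (auto simp: bij_betw_def)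
      then show "f \<alpha> x = g x" by (simp add: f_def g_def indicator_def)
    qed
  qed
  have "g \<in> LIM_wo r (borel_measurable lebesgue)"
    unfolding LIM_wo_def wo_pointwise_conv_def
  proof (intro CollectI exI[of _ f] conjI ballI allI impI)
    show "f \<alpha> \<in> borel_measurable lebesgue" if "\<alpha> \<in> Field r" for \<alpha> using fm that .
    fix x and \<epsilon> :: real assume "\<epsilon> > 0"
    then show "\<exists>\<alpha>0\<in>Field r. \<forall>\<alpha>\<in>Field r. (\<alpha>0, \<alpha>) \<in> r \<and> \<alpha> \<noteq> \<alpha>0 \<longrightarrow> \<bar>f \<alpha> x - g x\<bar> < \<epsilon>"
      using conv[of x] by force
  qed
  then show ?thesis using sub gn by blast
qed

end
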